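(* Let $\Omega\subset\mathbb{R}^d$ be a connected, bounded open domain, let $\mathbf{r}=(\mathbf{r}_1,\ldots,\mathbf{r}_n)\in\Upsilon$, and assume the hyperplanes $\mathcal{P}_1(\mathbf{r}_1),\ldots,\mathcal{P}_n(\mathbf{r}_n)$ are pairwise distinct. Then the $n(d+1)$ functions $\{H_i(\mathbf{x}),\,x_1H_i(\mathbf{x}),\,\ldots,\,x_dH_i(\mathbf{x})\}_{i=1}^n$ are linearly independent as functions on $\Omega$.
   Context: $\mathcal{S}^{d-1}$ is the unit sphere in $\mathbb{R}^d$. For $\mathbf{x}\in\mathbb{R}^d$ write $\mathbf{y}=(1,x_1,\ldots,x_d)^T$. For $\mathbf{r}_i=(b_i,\boldsymbol{\omega}_i)\in\mathbb{R}^{d+1}$, $\mathcal{P}_i(\mathbf{r}_i)=\{\mathbf{x}\in\Omega:\boldsymbol{\omega}_i\cdot\mathbf{x}+b_i=0\}$. The admissible set is $\Upsilon=\{\mathbf{r}=(\mathbf{r}_1,\ldots,\mathbf{r}_n): \mathbf{r}_i=(b_i,\boldsymbol{\omega}_i),\ b_i\in\mathbb{R},\ \boldsymbol{\omega}_i\in\mathcal{S}^{d-1},\ \mathcal{P}_i(\mathbf{r}_i)\cap\Omega\neq\emptyset\}$. $H(t)$ is the Heaviside function ($H(t)=1$ for $t>0$, $H(t)=0$ for $t<0$), and $H_i(\mathbf{x})=H(\mathbf{r}_i\cdot\mathbf{y})=H(\boldsymbol{\omega}_i\cdot\mathbf{x}+b_i)$. Linear independence is understood for functions defined almost everywhere on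 $\Omega$. *)

theory Defs
  imports "HOL-Analysis.Analysis"
begin

text \<open>Heaviside function. The value at 0 is irrelevant (statement is almost-everywhere);
  we fix H(0) = 0.\<close>
definition heaviside :: "real \<Rightarrow> real" where
  "heaviside t = (if t > 0 then 1 else 0)"

definition hyperplane_in :: "(real^'d) set \<Rightarrow> real \<Rightarrow> real^'d \<Rightarrow> (real^'d) set" where
  "hyperplane_in \<Omega> b \<omega> = {x \<in> \<Omega>. \<omega> \<bullet> x + b = 0}"

definition admissible :: "(real^'d) set \<Rightarrow> nat \<Rightarrow> (nat \<Rightarrow> real) \<Rightarrow> (nat \<Rightarrow> real^'d) \<Rightarrow> bool" where
  "admissible \<Omega> n b \<omega> \<longleftrightarrow>
     (\<forall>i<n. norm (\<omega> i) = 1 \<and> hyperplane_in \<Omega> (b i) (\<omega> i) \<noteq> {})"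

end

theory Submission imports Defs begin

lemma ae_zero_open:
  fixes f :: "real^'d \<Rightarrow> real"
  assumes U: "open U" and f: "continuous_on UNIV f"
    and ae: "AE x in lebesgue. x \<in> U \<longrightarrow> f x = 0"
  shows "\<forall>x\<in>U. f x = 0"
proof -
  from ae obtain N where N: "{x \<in> space lebesgue. \<not> (x \<in> U \<longrightarrow> f x = 0)} \<subseteq> N"
     "emeasure lebesgue N = 0" "N \<in> sets lebesgue" by (rule AE_E)
  have "N \<in> null_sets lebesgue" using N by auto
  hence negN: "negligible N" by (simp add: negligible_iff_null_sets)
  let ?V = "U \<inter> {x. f x \<noteq> 0}"
  have "open ?V"
    using U f by (intro open_Int) (auto intro!: open_Collect_neq continuous_intros)
  moreover have "negligible ?V" by (rule negligible_subset[OF negN]) (use N(1) in auto)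
  ultimately have "?V = {}" using open_not_negligible by blast
  thus ?thesis by auto
qed

lemma affine_zero_open:
  fixes c :: real and a :: "'d::finite \<Rightarrow> real"
  assumes U: "open U" "U \<noteq> {}"
    and z: "\<forall>x\<in>U. c + (\<Sum>k\<in>UNIV. a k * x $ k) = 0"
  shows "c = 0 \<and> (\<forall>k. a k = 0)"
proof -
  obtain y where y: "y \<in> U" using U by auto
  obtain e where e: "e > 0" "ball y e \<subseteq> U" using U(1) y open_contains_ball by blast
  have ak: "a k = 0" for k
  proof -
    let ?z = "y + (e/2) *\<^sub>R axis k 1"
    have "?z \<in> ball y e" using e by (simp add: dist_norm norm_axis_1)
    hence "?z \<in> U" using e by auto
    hence "c + (\<Sum>j\<in>UNIV. a j * ?z $ j) = 0" using z by auto
    moreover have "(\<Sum>j\<in>UNIV. a j * ?z $ j) = (\<Sum>j\<in>UNIV. a j * y $ j) + a k * (e/2)"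
    proof -
      have "(\<Sum>j\<in>UNIV. a j * ?z $ j) = (\<Sum>j\<in>UNIV. a j * y $ j + (if j = k then a k * (e/2) else 0))"
        by (rule sum.cong) (auto simp: axis_def algebra_simps)
      also have "\<dots> = (\<Sum>j\<in>UNIV. a j * y $ j) + a k * (e/2)"
        by (simp add: sum.distrib)
      finally show ?thesis .
    qed
    moreover have "c + (\<Sum>j\<in>UNIV. a j * y $ j) = 0" using z y by auto
    ultimately have "a k * (e/2) = 0" by linarith
    thus ?thesis using e by simp
  qed
  hence "c = 0" using z y by auto
  thus ?thesis using ak by auto
qed

lemma affine_ae_zero:
  fixes c :: real and a :: "'d::finite \<Rightarrow> real"
  assumes U: "open U" "U \<noteq> {}"
    and ae: "AE x in lebesgue. x \<in> U \<longrightarrow> c + (\<Sum>k\<in>UNIV. a k * x $ k) = 0"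
  shows "c = 0 \<and> (\<forall>k. a k = 0)"
proof (rule affine_zero_open[OF U])
  show "\<forall>x\<in>U. c + (\<Sum>k\<in>UNIV. a k * x $ k) = 0"
    by (rule ae_zero_open[OF U(1) _ ae]) (intro continuous_intros)
qed


lemma generic_point:
  fixes \<Omega> :: "(real^'d) set" and n :: nat
    and b :: "nat \<Rightarrow> real" and \<omega> :: "nat \<Rightarrow> real^'d"
  assumes op: "open \<Omega>" and adm: "admissible \<Omega> n b \<omega>"
    and dis: "\<And>i j. i < n \<Longrightarrow> j < n \<Longrightarrow> i \<noteq> j \<Longrightarrow>
           hyperplane_in \<Omega> (b i) (\<omega> i) \<noteq> hyperplane_in \<Omega> (b j) (\<omega> j)"
    and i: "i < n"
  shows "\<exists>p\<in>\<Omega>. \<omega> i \<bullet> p + b i = 0 \<and> (\<forall>j<n. j \<noteq> i \<longrightarrow> \<omega> j \<bullet> p + b j \<noteq> 0)"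
proof -
  have nrm: "\<And>j. j < n \<Longrightarrow> norm (\<omega> j) = 1" using adm by (auto simp: admissible_def)
  obtain q where q: "q \<in> \<Omega>" "\<omega> i \<bullet> q + b i = 0"
    using adm i by (auto simp: admissible_def hyperplane_in_def)
  have ii: "\<omega> i \<bullet> \<omega> i = 1" using nrm[OF i] by (metis power2_norm_eq_inner power_one)
  define w where "w j = \<omega> j - (\<omega> j \<bullet> \<omega> i) *\<^sub>R \<omega> i" for j
  define J where "J = {j. j < n \<and> j \<noteq> i \<and> \<omega> j \<bullet> q + b j = 0}"
  have wnz: "w j \<noteq> 0" if j: "j \<in> J" for j
  proof
    assume w0: "w j = 0"
    define l where "l = \<omega> j \<bullet> \<omega> i"
    have wj: "\<omega> j = l *\<^sub>R \<omega> i" using w0 by (simp add: w_def l_def)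
    have jn: "j < n" "j \<noteq> i" "\<omega> j \<bullet> q + b j = 0" using j by (auto simp: J_def)
    have "l \<noteq> 0" using nrm[OF jn(1)] wj by auto
    have bj: "b j = l * b i" using jn(3) q(2) wj
      by (simp add: algebra_simps) (metis add.commute add_diff_cancel_left' diff_0 minus_mult_right mult.commute)
    have "\<And>x. \<omega> j \<bullet> x + b j = l * (\<omega> i \<bullet> x + b i)"
      using wj bj by (simp add: algebra_simps)
    hence "hyperplane_in \<Omega> (b i) (\<omega> i) = hyperplane_in \<Omega> (b j) (\<omega> j)"
      using \<open>l \<noteq> 0\<close> by (auto simp: hyperplane_in_def)
    thus False using dis[OF i jn(1)] jn(2) by auto
  qed
  have finJ: "finite J" by (simp add: J_def)
  have "negligible (\<Union>j\<in>J. {x. w j \<bullet> x = 0})"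
    using finJ wnz by (intro negligible_Union) (auto intro!: negligible_hyperplane)
  moreover have "\<not> negligible (UNIV :: (real^'d) set)"
    by (rule open_not_negligible) auto
  ultimately have "(\<Union>j\<in>J. {x. w j \<bullet> x = 0}) \<noteq> UNIV" by metis
  then obtain x where x: "x \<notin> (\<Union>j\<in>J. {x. w j \<bullet> x = 0})" by blast
  define u where "u = x - (\<omega> i \<bullet> x) *\<^sub>R \<omega> i"
  have uj: "\<omega> j \<bullet> u = w j \<bullet> x" for j
    by (simp add: u_def w_def inner_diff_left inner_diff_right inner_commute)
  have ui: "\<omega> i \<bullet> u = 0" by (simp add: u_def inner_diff_right ii)
  define K where "K = {j. j < n \<and> j \<noteq> i \<and> \<omega> j \<bullet> q + b j \<noteq> 0}"
  define Ob where "Ob = \<Omega> \<inter> (\<Inter>j\<in>K. {x. \<omega> j \<bullet> x + b j \<noteq> 0})"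
  have "open Ob" unfolding Ob_def using op
    by (intro open_Int open_INT) (auto simp: K_def intro!: open_Collect_neq continuous_intros)
  moreover have "q \<in> Ob" using q by (auto simp: Ob_def K_def)
  ultimately obtain e where e: "e > 0" "ball q e \<subseteq> Ob" using open_contains_ball by blast
  define t where "t = e / (2 * (norm u + 1))"
  have t0: "t > 0" using e unfolding t_def by (intro divide_pos_pos) (auto intro: add_nonneg_pos)
  have "t * norm u < e"
  proof -
    have "t * norm u \<le> t * (norm u + 1)" using t0 by simp
    also have "\<dots> = e / 2" unfolding t_def
    proof -
      have "norm u + 1 > 0" by (simp add: add_nonneg_pos)
      thus "e / (2 * (norm u + 1)) * (norm u + 1) = e / 2" by (simp add: field_simps)
    qed
    finally show ?thesis using e by simp
  qed
  define p where "p = q + t *\<^sub>R u"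
  have "p \<in> ball q e" using \<open>t * norm u < e\<close> t0 by (simp add: p_def dist_norm)
  hence pO: "p \<in> Ob" using e by auto
  have lin: "\<omega> j \<bullet> p + b j = (\<omega> j \<bullet> q + b j) + t * (\<omega> j \<bullet> u)" for j
    by (simp add: p_def inner_add_right)
  show ?thesis
  proof (intro bexI conjI allI impI)
    show "p \<in> \<Omega>" using pO by (simp add: Ob_def)
    show "\<omega> i \<bullet> p + b i = 0" using lin[of i] q(2) ui by simp
    fix j assume j: "j < n" "j \<noteq> i"
    show "\<omega> j \<bullet> p + b j \<noteq> 0"
    proof (cases "\<omega> j \<bullet> q + b j = 0")
      case True
      hence "j \<in> J" using j by (simp add: J_def)
      hence "w j \<bullet> x \<noteq> 0" using x by auto
      thus ?thesis using lin[of j] True uj[of j] t0 by simp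
    next
      case False
      hence "j \<in> K" using j by (simp add: K_def)
      thus ?thesis using pO by (auto simp: Ob_def)
    qed
  qed
qed


theorem lemma2p2:
  fixes \<Omega> :: "(real^'d) set" and n :: nat
    and b :: "nat \<Rightarrow> real" and \<omega> :: "nat \<Rightarrow> real^'d"
  assumes "open \<Omega>" and "connected \<Omega>" and "bounded \<Omega>"
    and "admissible \<Omega> n b \<omega>"
    and "\<And>i j. i < n \<Longrightarrow> j < n \<Longrightarrow> i \<noteq> j \<Longrightarrow>
           hyperplane_in \<Omega> (b i) (\<omega> i) \<noteq> hyperplane_in \<Omega> (b j) (\<omega> j)"
  shows "\<forall>(c :: nat \<Rightarrow> real) (a :: nat \<Rightarrow> 'd \<Rightarrow> real).
           (AE x in lebesgue. x \<in> \<Omega> \<longrightarrow>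
              (\<Sum>i<n. (c i + (\<Sum>k\<in>UNIV. a i k * x $ k)) * heaviside (\<omega> i \<bullet> x + b i)) = 0)
           \<longrightarrow> (\<forall>i<n. c i = 0 \<and> (\<forall>k. a i k = 0))"
proof (intro allI impI)
  fix c :: "nat \<Rightarrow> real" and a :: "nat \<Rightarrow> 'd \<Rightarrow> real" and i
  assume ae: "AE x in lebesgue. x \<in> \<Omega> \<longrightarrow>
              (\<Sum>i<n. (c i + (\<Sum>k\<in>UNIV. a i k * x $ k)) * heaviside (\<omega> i \<bullet> x + b i)) = 0"
    and i: "i < n"
  have nrm: "\<And>j. j < n \<Longrightarrow> norm (\<omega> j) = 1" using assms(4) by (auto simp: admissible_def)
  have ii: "\<omega> i \<bullet> \<omega> i = 1" using nrm[OF i] by (metis power2_norm_eq_inner power_one)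
  obtain p where p: "p \<in> \<Omega>" "\<omega> i \<bullet> p + b i = 0" "\<And>j. j < n \<Longrightarrow> j \<noteq> i \<Longrightarrow> \<omega> j \<bullet> p + b j \<noteq> 0"
    using generic_point[OF assms(1) assms(4) assms(5) i] by blast
  define L where "L = {..<n} - {i}"
  define Ob where "Ob = \<Omega> \<inter> (\<Inter>j\<in>L. {x. 0 < (\<omega> j \<bullet> x + b j) * (\<omega> j \<bullet> p + b j)})"
  have "open Ob" unfolding Ob_def using assms(1)
    by (intro open_Int open_INT) (auto simp: L_def intro!: open_Collect_less continuous_intros)
  moreover have "p \<in> Ob"
  proof -
    have "0 < (\<omega> j \<bullet> p + b j) * (\<omega> j \<bullet> p + b j)" if "j \<in> L" for j
      using p(3)[of j] that by (auto simp: L_def not_square_less_zero less_le)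
    thus ?thesis using p(1) by (auto simp: Ob_def)
  qed
  ultimately obtain e where e: "e > 0" "ball p e \<subseteq> Ob" using open_contains_ball by blast
  define s where "s j = heaviside (\<omega> j \<bullet> p + b j)" for j
  define A where "A j x = c j + (\<Sum>k\<in>UNIV. a j k * x $ k)" for j and x :: "real^'d"
  define g where "g x = (\<Sum>j\<in>L. A j x * s j)" for x
  define G0 where "G0 = (\<Sum>j\<in>L. c j * s j)"
  define G where "G k = (\<Sum>j\<in>L. a j k * s j)" for k
  have gform: "g x = G0 + (\<Sum>k\<in>UNIV. G k * x $ k)" for x
  proof -
    have "g x = (\<Sum>j\<in>L. c j * s j + (\<Sum>k\<in>UNIV. a j k * s j * x $ k))"
      unfolding g_def A_def by (intro sum.cong) (auto simp: algebra_simps sum_distrib_right sum_distrib_left)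
    also have "\<dots> = G0 + (\<Sum>j\<in>L. \<Sum>k\<in>UNIV. a j k * s j * x $ k)"
      by (simp add: sum.distrib G0_def)
    also have "(\<Sum>j\<in>L. \<Sum>k\<in>UNIV. a j k * s j * x $ k) = (\<Sum>k\<in>UNIV. G k * x $ k)"
      unfolding G_def by (subst sum.swap) (simp add: sum_distrib_right)
    finally show ?thesis .
  qed
  have hs: "heaviside (\<omega> j \<bullet> x + b j) = s j" if "x \<in> Ob" "j \<in> L" for x j
  proof -
    have "0 < (\<omega> j \<bullet> x + b j) * (\<omega> j \<bullet> p + b j)" using that by (auto simp: Ob_def)
    thus ?thesis unfolding s_def heaviside_def by (auto simp: zero_less_mult_iff)
  qed
  have split: "(\<Sum>j<n. (c j + (\<Sum>k\<in>UNIV. a j k * x $ k)) * heaviside (\<omega> j \<bullet> x + b j))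
      = A i x * heaviside (\<omega> i \<bullet> x + b i) + g x" if "x \<in> Ob" for x
  proof -
    have "(\<Sum>j<n. (c j + (\<Sum>k\<in>UNIV. a j k * x $ k)) * heaviside (\<omega> j \<bullet> x + b j))
        = A i x * heaviside (\<omega> i \<bullet> x + b i) + (\<Sum>j\<in>L. A j x * heaviside (\<omega> j \<bullet> x + b j))"
      unfolding A_def L_def using i by (subst sum.remove[of _ i]) auto
    also have "(\<Sum>j\<in>L. A j x * heaviside (\<omega> j \<bullet> x + b j)) = g x"
      unfolding g_def using hs[OF that] by (intro sum.cong) auto
    finally show ?thesis .
  qed
  have ObO: "Ob \<subseteq> \<Omega>" by (auto simp: Ob_def)
  define Sm where "Sm = ball p e \<inter> {x. \<omega> i \<bullet> x + b i < 0}"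
  define Sp where "Sp = ball p e \<inter> {x. 0 < \<omega> i \<bullet> x + b i}"
  have "open Sm" unfolding Sm_def by (intro open_Int open_ball open_Collect_less continuous_intros) 
  have "open Sp" unfolding Sp_def by (intro open_Int open_ball open_Collect_less continuous_intros) 
  have "p - (e/2) *\<^sub>R \<omega> i \<in> Sm" using e p(2) nrm[OF i]
    by (simp add: Sm_def dist_norm inner_diff_right ii)
  hence "Sm \<noteq> {}" by auto
  have "p + (e/2) *\<^sub>R \<omega> i \<in> Sp" using e p(2) nrm[OF i]
    by (simp add: Sp_def dist_norm inner_add_right ii)
  hence "Sp \<noteq> {}" by auto
  have "AE x in lebesgue. x \<in> Sm \<longrightarrow> G0 + (\<Sum>k\<in>UNIV. G k * x $ k) = 0"
    using ae
  proof (rule eventually_mono)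
    fix x assume h: "x \<in> \<Omega> \<longrightarrow>
              (\<Sum>i<n. (c i + (\<Sum>k\<in>UNIV. a i k * x $ k)) * heaviside (\<omega> i \<bullet> x + b i)) = 0"
    show "x \<in> Sm \<longrightarrow> G0 + (\<Sum>k\<in>UNIV. G k * x $ k) = 0"
    proof
      assume x: "x \<in> Sm"
      hence xO: "x \<in> Ob" using e by (auto simp: Sm_def)
      have "heaviside (\<omega> i \<bullet> x + b i) = 0" using x by (simp add: Sm_def heaviside_def)
      thus "G0 + (\<Sum>k\<in>UNIV. G k * x $ k) = 0"
        using h xO ObO split[OF xO] gform[of x] by auto
    qed
  qed
  from affine_ae_zero[OF \<open>open Sm\<close> \<open>Sm \<noteq> {}\<close> this]
  have g0: "g x = 0" for x using gform by simp
  have "AE x in lebesgue. x \<in> Sp \<longrightarrow> c i + (\<Sum>k\<in>UNIV. a i k * x $ k) = 0"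
    using ae
  proof (rule eventually_mono)
    fix x assume h: "x \<in> \<Omega> \<longrightarrow>
              (\<Sum>i<n. (c i + (\<Sum>k\<in>UNIV. a i k * x $ k)) * heaviside (\<omega> i \<bullet> x + b i)) = 0"
    show "x \<in> Sp \<longrightarrow> c i + (\<Sum>k\<in>UNIV. a i k * x $ k) = 0"
    proof
      assume x: "x \<in> Sp"
      hence xO: "x \<in> Ob" using e by (auto simp: Sp_def)
      have "heaviside (\<omega> i \<bullet> x + b i) = 1" using x by (simp add: Sp_def heaviside_def)
      thus "c i + (\<Sum>k\<in>UNIV. a i k * x $ k) = 0"
        using h xO ObO split[OF xO] g0[of x] by (auto simp: A_def)
    qed
  qed
  from affine_ae_zero[OF \<open>open Sp\<close> \<open>Sp \<noteq> {}\<close> this]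
  show "c i = 0 \<and> (\<forall>k. a i k = 0)" .
qed

end
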